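(* Let $\mathcal{G}=(V,E)$ be an unweighted simple directed graph, let $i\neq j$ be two distinct nodes of $V$, and let $\phi$ be a spanning converging forest chosen uniformly at random from the set $\mathcal{F}$ of all spanning converging forests of $\mathcal{G}$. Define $$\widetilde{\omega}_{ij}(\phi)=\frac{1}{1+d_j}\sum_{k\in N^-_j}\widehat{\omega}_{ik}(\phi).$$ Then $\widetilde{\omega}_{ij}$ is an unbiased estimator of $\omega_{ij}$, i.e. $\mathbb{E}(\widetilde{\omega}_{ij}(\phi))=\omega_{ij}$, its variance is $${\rm Var}(\widetilde{\omega}_{ij})=\frac{\omega_{ij}}{1+d_j}-\omega_{ij}^2,$$ and this variance is always less than or equal to the variance of the estimator $\widehat{\omega}_{ij}(\phi)$.
   Context: $\mathcal{G}=(V,E)$ has $n$ nodes; $a_{ij}=1$ if $(i,j)\in E$ and $0$ otherwise. $d_i=\sum_j a_{ij}$ is the out-degree of $i$, $\mathbf{D}=\mathrm{diag}(d_1,\dots,d_n)$, $\mathbf{L}=\mathbf{D}-\mathbf{A}$ is the Laplacian, and the forest matrix is $\mathbf{\Omega}=(\mathbf{I}+\mathbf{L})^{-1}=(\omega_{ij})$. $N^-_j=\{k:(k,j)\in E\}$ is the set of in-neighbors of $j$. A rooted converging tree is a weakly connected digraph without cycles in which one node (the root) has out-degree $0$ and every other node has out-degree $1$ (an isolated node is such a tree, rooted at itself). A spanning converging forest of $\mathcal{G}$ is a spanning subgraph (containing all of $V$ and a subset of $E$) whose weakly connected components are rooted converging trees. For such a forest $\phi$ and node $i$, $r_\phi(i)$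 denotes the root of the tree of $\phi$ containing $i$. The basic estimator is $\widehat{\omega}_{ij}(\phi)=\mathbb{I}_{\{r_\phi(i)=j\}}$, which equals $1$ if $r_\phi(i)=j$ and $0$ otherwise. *)

theory Defs
  imports "HOL-Analysis.Analysis" "HOL-Probability.Probability"
begin

text \<open>Digraph on the finite vertex type 'n (V = UNIV), edge set E.
  a_ij = 1 iff (i,j) in E.\<close>

definition adj :: "('n::finite \<times> 'n) set \<Rightarrow> 'n \<Rightarrow> 'n \<Rightarrow> real" where
  "adj E i j = (if (i, j) \<in> E then 1 else 0)"

definition outdeg :: "('n::finite \<times> 'n) set \<Rightarrow> 'n \<Rightarrow> real" where
  "outdeg E i = (\<Sum>j\<in>UNIV. adj E i j)"

definition laplacian :: "('n::finite \<times> 'n) set \<Rightarrow> real^'n^'n" where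
  "laplacian E = (\<chi> i j. (if i = j then outdeg E i else 0) - adj E i j)"

definition forest_matrix :: "('n::finite \<times> 'n) set \<Rightarrow> real^'n^'n" where
  "forest_matrix E = matrix_inv (mat 1 + laplacian E)"

definition in_nbrs :: "('n \<times> 'n) set \<Rightarrow> 'n \<Rightarrow> 'n set" where
  "in_nbrs E j = {k. (k, j) \<in> E}"

definition rooted_converging_tree :: "'n set \<Rightarrow> ('n \<times> 'n) set \<Rightarrow> bool" where
  "rooted_converging_tree C T \<longleftrightarrow>
     T \<subseteq> C \<times> C \<and>
     C \<times> C \<subseteq> (T \<union> T\<inverse>)\<^sup>* \<and>
     acyclic T \<and>
     (\<exists>r\<in>C. card {v. (r, v) \<in> T} = 0 \<and> (\<forall>u\<in>C - {r}. card {v. (u, v) \<in> T} = 1))"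

definition weak_components :: "('n \<times> 'n) set \<Rightarrow> 'n set set" where
  "weak_components F = UNIV // ((F \<union> F\<inverse>)\<^sup>*)"

definition spanning_converging_forests :: "('n::finite \<times> 'n) set \<Rightarrow> ('n \<times> 'n) set set" where
  "spanning_converging_forests E =
     {F. F \<subseteq> E \<and> (\<forall>C\<in>weak_components F. rooted_converging_tree C (F \<inter> (C \<times> C)))}"

definition froot :: "('n \<times> 'n) set \<Rightarrow> 'n \<Rightarrow> 'n" where
  "froot F i = (THE r. (i, r) \<in> (F \<union> F\<inverse>)\<^sup>* \<and> card {v. (r, v) \<in> F} = 0)"

definition est_hat :: "'n \<Rightarrow> 'n \<Rightarrow> ('n \<times> 'n) set \<Rightarrow> real" where
  "est_hat i j F = (if froot F i = j then 1 else 0)"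

definition est_tilde :: "('n::finite \<times> 'n) set \<Rightarrow> 'n \<Rightarrow> 'n \<Rightarrow> ('n \<times> 'n) set \<Rightarrow> real" where
  "est_tilde E i j F = (1 / (1 + outdeg E j)) * (\<Sum>k\<in>in_nbrs E j. est_hat i k F)"

end

theory Submission imports Defs begin

definition sinkF :: "('n \<times> 'n) set \<Rightarrow> 'n \<Rightarrow> bool" where
  "sinkF F u \<longleftrightarrow> (\<forall>v. (u,v) \<notin> F)"
definition funcF :: "('n \<times> 'n) set \<Rightarrow> bool" where
  "funcF F \<longleftrightarrow> (\<forall>u v w. (u,v)\<in>F \<longrightarrow> (u,w)\<in>F \<longrightarrow> v = w)"
definition forestF :: "('n \<times> 'n) set \<Rightarrow> bool" where
  "forestF F \<longleftrightarrow> funcF F \<and> acyclic F"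
definition RF :: "('n \<times> 'n) set \<Rightarrow> 'n \<Rightarrow> 'n" where
  "RF F x = (THE r. (x,r)\<in>F\<^sup>* \<and> sinkF F r)"

lemma R_ex:
  fixes F :: "('n::finite \<times> 'n) set"
  assumes "acyclic F" shows "\<exists>r. (x,r)\<in>F\<^sup>* \<and> sinkF F r"
proof -
  have wf: "wf (F\<inverse>)" using finite_acyclic_wf_converse[OF _ assms] by simp
  show ?thesis
  proof (induction x rule: wf_induct[OF wf])
    case (1 x)
    show ?case
    proof (cases "sinkF F x")
      case True then show ?thesis by blast
    next
      case False then obtain v where v: "(x,v)\<in>F" by (auto simp: sinkF_def)
      with 1 obtain r where "(v,r)\<in>F\<^sup>*" "sinkF F r" by blast
      with v show ?thesis by (meson converse_rtrancl_into_rtrancl)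
    qed
  qed
qed

lemma R_uniq:
  assumes f: "funcF F" and "(x,r1)\<in>F\<^sup>*" "sinkF F r1" "(x,r2)\<in>F\<^sup>*" "sinkF F r2"
  shows "r1 = r2"
  using assms(2,3,4,5)
proof (induction x rule: converse_rtrancl_induct)
  case base
  then show ?case by (metis converse_rtranclE sinkF_def)
next
  case (step y z)
  have "y \<noteq> r2" using step.prems(3) step.hyps(1) by (auto simp: sinkF_def)
  then obtain w where w: "(y,w)\<in>F" "(w,r2)\<in>F\<^sup>*"
    using step.prems(2) by (metis converse_rtranclE)
  then have "w = z" using f \<open>(y,z)\<in>F\<close> by (auto simp: funcF_def)
  then show ?case using step.IH step.prems w by blast
qed

lemma R_eq:
  fixes F :: "('n::finite \<times> 'n) set"
  assumes "forestF F" "(x,r)\<in>F\<^sup>*" "sinkF F r" shows "RF F x = r"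
  unfolding RF_def
  using assms R_uniq by (auto simp: forestF_def intro!: the_equality)

lemma R_prop:
  fixes F :: "('n::finite \<times> 'n) set"
  assumes "forestF F" shows "(x, RF F x)\<in>F\<^sup>* \<and> sinkF F (RF F x)"
proof -
  obtain r where "(x,r)\<in>F\<^sup>*" "sinkF F r" using R_ex assms forestF_def by blast
  then show ?thesis using R_eq[OF assms] by simp
qed

lemma R_sink:
  fixes F :: "('n::finite \<times> 'n) set"
  assumes "forestF F" "sinkF F x" shows "RF F x = x"
  using R_eq assms by blast

lemma R_sink_iff:
  fixes F :: "('n::finite \<times> 'n) set"
  assumes "forestF F" shows "RF F x = x \<longleftrightarrow> sinkF F x"
  using R_prop[OF assms, of x] R_sink[OF assms] by metis

lemma R_step:
  fixes F :: "('n::finite \<times> 'n) set"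
  assumes "forestF F" "(u,v)\<in>F" shows "RF F u = RF F v"
  using R_prop[OF assms(1), of v] R_eq[OF assms(1)] assms(2)
  by (meson converse_rtrancl_into_rtrancl)

lemma R_weak:
  fixes F :: "('n::finite \<times> 'n) set"
  assumes "forestF F" "(u,v)\<in>(F \<union> F\<inverse>)\<^sup>*" shows "RF F u = RF F v"
  using assms(2)
proof (induction rule: rtrancl_induct)
  case base then show ?case by simp
next
  case (step y z)
  then show ?case using R_step[OF assms(1)] by auto
qed

lemma froot_eq:
  fixes F :: "('n::finite \<times> 'n) set"
  assumes "forestF F" shows "froot F x = RF F x"
proof -
  have fin: "\<And>r. finite {v. (r, v) \<in> F}" by simp
  have sk: "\<And>r. card {v. (r, v) \<in> F} = 0 \<longleftrightarrow> sinkF F r"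
    using fin by (auto simp: sinkF_def)
  have p: "(x, RF F x) \<in> (F \<union> F\<inverse>)\<^sup>*"
    using R_prop[OF assms, of x] rtrancl_mono[of F "F \<union> F\<inverse>"] by blast
  show ?thesis
    unfolding froot_def sk
  proof (rule the_equality)
    show "(x, RF F x) \<in> (F \<union> F\<inverse>)\<^sup>* \<and> sinkF F (RF F x)" using p R_prop[OF assms] by blast
  next
    fix r assume "(x, r) \<in> (F \<union> F\<inverse>)\<^sup>* \<and> sinkF F r"
    then show "r = RF F x" using R_weak[OF assms, of x r] R_sink[OF assms, of r] by simp
  qed
qed


lemma trancl_restrict:
  assumes "(a,b)\<in>F\<^sup>+" "a\<in>C" "\<And>u v. (u,v)\<in>F \<Longrightarrow> u\<in>C \<Longrightarrow> v\<in>C"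
  shows "(a,b)\<in>(F \<inter> C \<times> C)\<^sup>+ \<and> b \<in> C"
  using assms(1)
proof (induction rule: trancl_induct)
  case (base y) then show ?case using assms by auto
next
  case (step y z)
  then have "z \<in> C" using assms(3) by blast
  then show ?case using step by (meson IntI SigmaI trancl.trancl_into_trancl)
qed

lemma rtrancl_restrict:
  assumes "(a,b)\<in>(F \<union> F\<inverse>)\<^sup>*" "a\<in>C" "\<And>u v. (u,v)\<in>F \<Longrightarrow> u\<in>C \<longleftrightarrow> v\<in>C"
  shows "(a,b)\<in>((F \<inter> C \<times> C) \<union> (F \<inter> C \<times> C)\<inverse>)\<^sup>* \<and> b \<in> C"
  using assms(1)
proof (induction rule: rtrancl_induct)
  case base then show ?case using assms by auto
next
  case (step y z)
  then have "z \<in> C" using assms(3) by blast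
  then have "(y,z) \<in> (F \<inter> C \<times> C) \<union> (F \<inter> C \<times> C)\<inverse>" using step by auto
  then show ?case using step \<open>z\<in>C\<close> by (meson rtrancl.rtrancl_into_rtrancl)
qed

lemma scf_char:
  fixes E :: "('n::finite \<times> 'n) set"
  shows "spanning_converging_forests E = {F. F \<subseteq> E \<and> forestF F}"
proof (intro set_eqI iffI)
  fix F assume "F \<in> spanning_converging_forests E"
  then have sub: "F \<subseteq> E" and tr: "\<And>C. C \<in> weak_components F \<Longrightarrow> rooted_converging_tree C (F \<inter> C \<times> C)"
    by (auto simp: spanning_converging_forests_def)
  define W where "W = (F \<union> F\<inverse>)\<^sup>*"
  define comp where "comp u = W `` {u}" for u
  have compW: "comp u \<in> weak_components F" for u
    unfolding weak_components_def comp_def W_def by (simp add: quotientI)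
  have ucomp: "u \<in> comp u" for u unfolding comp_def W_def by simp
  have closed: "v \<in> comp w" if "(u,v)\<in>F" "u \<in> comp w" for u v w
    using that unfolding comp_def W_def
    by (auto intro: rtrancl_into_rtrancl)
  have fu: "funcF F"
    unfolding funcF_def
  proof (intro allI impI)
    fix u v w assume uv: "(u,v)\<in>F" and uw: "(u,w)\<in>F"
    let ?C = "comp u"
    let ?T = "F \<inter> ?C \<times> ?C"
    obtain r where r: "r\<in>?C" "card {v. (r, v) \<in> ?T} = 0" "\<forall>x\<in>?C - {r}. card {v. (x, v) \<in> ?T} = 1"
      using tr[OF compW[of u]] unfolding rooted_converging_tree_def by blast
    have vC: "v \<in> ?C" "w \<in> ?C" using closed uv uw ucomp by blast+
    have fin: "finite {y. (u, y) \<in> ?T}" by simp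
    have "u \<noteq> r"
    proof
      assume "u = r"
      then have "v \<in> {y. (r, y) \<in> ?T}" using uv vC ucomp by auto
      then show False using r(2) fin \<open>u = r\<close> by auto
    qed
    then have "card {y. (u, y) \<in> ?T} = 1" using r(3) ucomp by blast
    moreover have "v \<in> {y. (u, y) \<in> ?T}" "w \<in> {y. (u, y) \<in> ?T}" using uv uw vC ucomp by auto
    ultimately show "v = w" by (metis card_1_singletonE singletonD)
  qed
  have acy: "acyclic F"
    unfolding acyclic_def
  proof (intro allI notI)
    fix x assume xx: "(x,x)\<in>F\<^sup>+"
    let ?C = "comp x"
    have "(x,x)\<in>(F \<inter> ?C \<times> ?C)\<^sup>+"
      using trancl_restrict[OF xx ucomp[of x]] closed by blast
    moreover have "acyclic (F \<inter> ?C \<times> ?C)"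
      using tr[OF compW[of x]] unfolding rooted_converging_tree_def by blast
    ultimately show False unfolding acyclic_def by blast
  qed
  show "F \<in> {F. F \<subseteq> E \<and> forestF F}" using sub fu acy by (simp add: forestF_def)
next
  fix F assume "F \<in> {F. F \<subseteq> E \<and> forestF F}"
  then have sub: "F \<subseteq> E" and fo: "forestF F" by auto
  have "rooted_converging_tree C (F \<inter> C \<times> C)" if C: "C \<in> weak_components F" for C
  proof -
    obtain u where Cu: "C = (F \<union> F\<inverse>)\<^sup>* `` {u}"
      using C unfolding weak_components_def by (auto elim: quotientE)
    have closed: "\<And>a b. (a,b)\<in>F \<Longrightarrow> a\<in>C \<longleftrightarrow> b\<in>C"
      unfolding Cu by (auto intro: rtrancl_into_rtrancl)
    have memC: "x \<in> C \<longleftrightarrow> (u,x) \<in> (F \<union> F\<inverse>)\<^sup>*" for x unfolding Cu by simp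
    let ?T = "F \<inter> C \<times> C"
    have conn: "C \<times> C \<subseteq> (?T \<union> ?T\<inverse>)\<^sup>*"
    proof
      fix p assume "p \<in> C \<times> C"
      then obtain a b where p: "p = (a,b)" "a\<in>C" "b\<in>C" by blast
      have "(a,u) \<in> (F \<union> F\<inverse>)\<^sup>*" using p memC
        by (metis converse_Un converse_converse rtrancl_converseI sup_commute)
      moreover have "(u,b) \<in> (F \<union> F\<inverse>)\<^sup>*" using p memC by blast
      ultimately have "(a,b) \<in> (F \<union> F\<inverse>)\<^sup>*" by (rule rtrancl_trans)
      then show "p \<in> (?T \<union> ?T\<inverse>)\<^sup>*" using rtrancl_restrict[of a b F C] p closed by blast
    qed
    have acy: "acyclic ?T" using fo acyclic_subset[of F ?T] by (auto simp: forestF_def)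
    define r where "r = RF F u"
    have rC: "r \<in> C" using R_prop[OF fo, of u] memC r_def rtrancl_mono[of F "F \<union> F\<inverse>"] by blast
    have r0: "card {v. (r, v) \<in> ?T} = 0" using R_prop[OF fo, of u] r_def by (auto simp: sinkF_def)
    have r1: "card {v. (x, v) \<in> ?T} = 1" if x: "x \<in> C - {r}" for x
    proof -
      have "RF F x = r" using R_weak[OF fo, of u x] x memC r_def by simp
      then have "\<not> sinkF F x" using R_sink[OF fo, of x] x by auto
      then obtain v where v: "(x,v)\<in>F" by (auto simp: sinkF_def)
      have "{v. (x, v) \<in> ?T} = {v}"
        using v fo closed x by (auto simp: forestF_def funcF_def)
      then show ?thesis by simp
    qed
    show ?thesis unfolding rooted_converging_tree_def
      using conn acy rC r0 r1 by blast
  qed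
  then show "F \<in> spanning_converging_forests E"
    using sub by (simp add: spanning_converging_forests_def)
qed


lemma add_edge:
  fixes F0 :: "('n::finite \<times> 'n) set"
  assumes fo: "forestF F0" and sk: "sinkF F0 i" and mi: "RF F0 m \<noteq> i"
  shows "forestF (insert (i,m) F0)"
    and "RF (insert (i,m) F0) x = (if RF F0 x = i then RF F0 m else RF F0 x)"
proof -
  have nr: "(m,i) \<notin> F0\<^sup>*" using R_eq[OF fo _ sk] mi by blast
  have fu: "funcF (insert (i,m) F0)"
    using fo sk unfolding forestF_def funcF_def sinkF_def by blast
  have ac: "acyclic (insert (i,m) F0)"
    using fo nr by (simp add: forestF_def acyclic_insert)
  show fo2: "forestF (insert (i,m) F0)" using fu ac by (simp add: forestF_def)
  let ?F = "insert (i,m) F0"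
  have skF: "sinkF ?F r" if "sinkF F0 r" "r \<noteq> i" for r
    using that by (auto simp: sinkF_def)
  have mono: "F0\<^sup>* \<subseteq> ?F\<^sup>*" by (rule rtrancl_mono) auto
  show "RF ?F x = (if RF F0 x = i then RF F0 m else RF F0 x)"
  proof (cases "RF F0 x = i")
    case True
    have "(x,i) \<in> ?F\<^sup>*" using R_prop[OF fo, of x] True mono by auto
    moreover have "(i,m) \<in> ?F" by simp
    moreover have "(m, RF F0 m) \<in> ?F\<^sup>*" using R_prop[OF fo, of m] mono by auto
    ultimately have "(x, RF F0 m) \<in> ?F\<^sup>*" by (meson rtrancl_into_rtrancl rtrancl_trans)
    moreover have "sinkF ?F (RF F0 m)" using skF R_prop[OF fo, of m] mi by blast
    ultimately show ?thesis using R_eq[OF fo2] True by simp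
  next
    case False
    have "(x, RF F0 x) \<in> ?F\<^sup>*" using R_prop[OF fo, of x] mono by auto
    moreover have "sinkF ?F (RF F0 x)" using skF R_prop[OF fo, of x] False by blast
    ultimately show ?thesis using R_eq[OF fo2] False by simp
  qed
qed

lemma forest_sub:
  assumes "forestF F" "G \<subseteq> F" shows "forestF G"
  using assms acyclic_subset unfolding forestF_def funcF_def by blast

lemma sum_nonsink:
  fixes E :: "('n::finite \<times> 'n) set" and h :: "('n \<times> 'n) set \<Rightarrow> real"
  defines "S \<equiv> {F. F \<subseteq> E \<and> forestF F}"
  shows "(\<Sum>F\<in>{F\<in>S. \<not> sinkF F i}. h F)
       = (\<Sum>F0\<in>{F\<in>S. sinkF F i}. \<Sum>m\<in>{m. (i,m)\<in>E \<and> RF F0 m \<noteq> i}. h (insert (i,m) F0))"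
proof -
  let ?A = "{F\<in>S. sinkF F i}"
  let ?B = "\<lambda>F0. {m. (i,m)\<in>E \<and> RF F0 m \<noteq> i}"
  let ?g = "\<lambda>p. insert (i, snd p) (fst p)"
  have "(\<Sum>F0\<in>?A. \<Sum>m\<in>?B F0. h (insert (i,m) F0)) = (\<Sum>p\<in>Sigma ?A ?B. h (?g p))"
    by (subst sum.Sigma) (auto simp: case_prod_beta)
  also have "\<dots> = (\<Sum>F\<in>{F\<in>S. \<not> sinkF F i}. h F)"
  proof (rule sum.reindex_bij_betw)
    show "bij_betw ?g (Sigma ?A ?B) {F\<in>S. \<not> sinkF F i}"
      unfolding bij_betw_def
    proof (intro conjI)
      show "inj_on ?g (Sigma ?A ?B)"
      proof (rule inj_onI)
        fix p q assume p: "p \<in> Sigma ?A ?B" and q: "q \<in> Sigma ?A ?B" and eq: "?g p = ?g q"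
        obtain F0 m where pp: "p = (F0,m)" by (cases p)
        obtain F1 m' where qq: "q = (F1,m')" by (cases q)
        have s0: "sinkF F0 i" "sinkF F1 i" using p q pp qq by auto
        have "(i,m) \<in> insert (i,m') F1" using eq pp qq by auto
        then have "m = m'" using s0 by (auto simp: sinkF_def)
        moreover have "F0 = insert (i,m) F0 - {(i,m)}" "F1 = insert (i,m) F1 - {(i,m)}"
          using s0 by (auto simp: sinkF_def)
        ultimately show "p = q" using eq pp qq by (metis fst_conv snd_conv)
      qed
      show "?g ` Sigma ?A ?B = {F\<in>S. \<not> sinkF F i}"
      proof (intro set_eqI iffI)
        fix F assume "F \<in> ?g ` Sigma ?A ?B"
        then obtain F0 m where F: "F = insert (i,m) F0" "F0 \<in> ?A" "m \<in> ?B F0" by auto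
        have "forestF F" using add_edge(1)[of F0 i m] F by (auto simp: S_def)
        moreover have "F \<subseteq> E" using F by (auto simp: S_def)
        moreover have "\<not> sinkF F i" using F by (auto simp: sinkF_def)
        ultimately show "F \<in> {F\<in>S. \<not> sinkF F i}" by (simp add: S_def)
      next
        fix F assume F: "F \<in> {F\<in>S. \<not> sinkF F i}"
        then obtain m where im: "(i,m)\<in>F" by (auto simp: sinkF_def)
        have fo: "forestF F" "F \<subseteq> E" using F by (auto simp: S_def)
        let ?F0 = "F - {(i,m)}"
        have fo0: "forestF ?F0" using forest_sub[OF fo(1)] by blast
        have sk0: "sinkF ?F0 i" using fo im by (auto simp: sinkF_def forestF_def funcF_def)
        have "RF ?F0 m \<noteq> i"
        proof
          assume "RF ?F0 m = i"
          then have "(m,i) \<in> ?F0\<^sup>*" using R_prop[OF fo0, of m] by simp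
          then have "(m,i) \<in> F\<^sup>*" using rtrancl_mono[of ?F0 F] by blast
          then have "(i,i) \<in> F\<^sup>+" using im by (meson rtrancl_into_trancl2)
          then show False using fo by (auto simp: forestF_def acyclic_def)
        qed
        then have "(?F0, m) \<in> Sigma ?A ?B" using fo fo0 sk0 im by (auto simp: S_def)
        moreover have "F = ?g (?F0, m)" using im by auto
        ultimately show "F \<in> ?g ` Sigma ?A ?B" by blast
      qed
    qed
  qed
  finally show ?thesis by simp
qed


lemma card_split_real:
  fixes A :: "'a set" and P :: "'a \<Rightarrow> bool"
  assumes "finite A"
  shows "(\<Sum>k\<in>A. (if P k then 1 else 0::real)) + real (card {m. m \<in> A \<and> \<not> P m}) = real (card A)"
proof -
  have "real (card {m. m \<in> A \<and> \<not> P m}) = (\<Sum>k\<in>A. (if \<not> P k then 1 else 0::real))"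
    using sum.inter_filter[OF assms, of "\<lambda>_. 1::real" "\<lambda>k. \<not> P k"] by simp
  moreover have "real (card A) = (\<Sum>k\<in>A. (1::real))" by simp
  moreover have "(\<Sum>k\<in>A. (if P k then 1 else 0::real)) + (\<Sum>k\<in>A. (if \<not> P k then 1 else 0::real)) = (\<Sum>k\<in>A. (1::real))"
    by (subst sum.distrib[symmetric]) (rule sum.cong, auto)
  ultimately show ?thesis by linarith
qed


lemma perF0_P1:
  fixes F0 :: "('n::finite \<times> 'n) set"
  assumes fo: "forestF F0" and ij: "i \<noteq> j"
  shows "(\<Sum>m\<in>{m. (i,m)\<in>E \<and> RF F0 m \<noteq> i}. (if RF F0 m = j then 1 else 0::real))
       = (\<Sum>m\<in>{m. (i,m)\<in>E}. (if RF F0 m = j then 1 else 0::real))"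
  by (rule sum.mono_neutral_left) (auto simp: ij)

lemma perF0_P2:
  fixes F0 :: "('n::finite \<times> 'n) set"
  assumes fo: "forestF F0" and sk: "sinkF F0 i" and ij: "i \<noteq> j"
  shows "(\<Sum>m\<in>{m. (i,m)\<in>E \<and> RF F0 m \<noteq> i}. \<Sum>k\<in>{m. (i,m)\<in>E}. (if RF (insert (i,m) F0) k = j then 1 else 0::real))
       = real (card {m. (i,m)\<in>E}) * (\<Sum>m\<in>{m. (i,m)\<in>E}. (if RF F0 m = j then 1 else 0::real))"
proof -
  let ?out = "{m. (i,m)\<in>E}"
  let ?B = "{m. (i,m)\<in>E \<and> RF F0 m \<noteq> i}"
  define a where "a = (\<Sum>m\<in>?out. (if RF F0 m = j then 1 else 0::real))"
  define c where "c = (\<Sum>k\<in>?out. (if RF F0 k = i then 1 else 0::real))"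
  have inner: "(\<Sum>k\<in>?out. (if RF (insert (i,m) F0) k = j then 1 else 0::real))
      = c * (if RF F0 m = j then 1 else 0) + a" if m: "m \<in> ?B" for m
  proof -
    have "(\<Sum>k\<in>?out. (if RF (insert (i,m) F0) k = j then 1 else 0::real))
       = (\<Sum>k\<in>?out. (if RF F0 k = i then 1 else 0) * (if RF F0 m = j then 1 else 0) + (if RF F0 k = j then 1 else 0::real))"
      by (rule sum.cong) (use m add_edge(2)[OF fo sk, of m] ij in auto)
    also have "\<dots> = c * (if RF F0 m = j then 1 else 0) + a"
      by (simp add: sum.distrib sum_distrib_right c_def a_def)
    finally show ?thesis .
  qed
  have "(\<Sum>m\<in>?B. \<Sum>k\<in>?out. (if RF (insert (i,m) F0) k = j then 1 else 0::real))
      = (\<Sum>m\<in>?B. c * (if RF F0 m = j then 1 else 0) + a)"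
    by (rule sum.cong) (use inner in auto)
  also have "\<dots> = c * a + real (card ?B) * a"
    using perF0_P1[OF fo ij, of E] by (simp add: sum.distrib sum_distrib_left[symmetric] a_def)
  also have "\<dots> = (c + real (card ?B)) * a"
    by (simp add: distrib_right)
  also have "\<dots> = real (card ?out) * a"
    using card_split_real[of ?out "\<lambda>k. RF F0 k = i"] unfolding c_def by simp
  finally show ?thesis by (simp add: a_def)
qed

lemma perF0_Q:
  fixes F0 :: "('n::finite \<times> 'n) set"
  shows "(\<Sum>k\<in>{m. (i,m)\<in>E}. (if RF F0 k = i then 1 else 0::real)) + real (card {m. (i,m)\<in>E \<and> RF F0 m \<noteq> i})
     = real (card {m. (i,m)\<in>E})"
  using card_split_real[of "{m. (i,m)\<in>E}" "\<lambda>k. RF F0 k = i"] by simp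


lemma key:
  fixes E :: "('n::finite \<times> 'n) set"
  defines "S \<equiv> {F. F \<subseteq> E \<and> forestF F}"
  defines "fc \<equiv> \<lambda>a b. (\<Sum>F\<in>S. (if RF F a = b then 1 else 0::real))"
  shows "(1 + real (card {m. (i,m)\<in>E})) * fc i j - (\<Sum>k\<in>{m. (i,m)\<in>E}. fc k j)
       = (if i = j then real (card S) else 0)"
proof -
  let ?out = "{m. (i,m)\<in>E}"
  let ?d = "real (card ?out)"
  let ?S0 = "{F\<in>S. sinkF F i}"
  let ?S1 = "{F\<in>S. \<not> sinkF F i}"
  let ?B = "\<lambda>F0. {m. (i,m)\<in>E \<and> RF F0 m \<noteq> i}"
  have split: "sum h S = sum h ?S0 + sum h ?S1" for h :: "('n \<times> 'n) set \<Rightarrow> real"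
    by (subst sum.union_disjoint[symmetric]) (auto intro: sum.cong)
  have fo: "forestF F" if "F \<in> S" for F using that by (simp add: S_def)
  have nons: "sum h ?S1 = (\<Sum>F0\<in>?S0. \<Sum>m\<in>?B F0. h (insert (i,m) F0))" for h :: "('n \<times> 'n) set \<Rightarrow> real"
    unfolding S_def by (rule sum_nonsink)
  have swap: "(\<Sum>k\<in>?out. fc k j) = (\<Sum>F\<in>S. \<Sum>k\<in>?out. (if RF F k = j then 1 else 0::real))"
    unfolding fc_def by (rule sum.swap)
  show ?thesis
  proof (cases "i = j")
    case False
    define a where "a F0 = (\<Sum>m\<in>?out. (if RF F0 m = j then 1 else 0::real))" for F0
    have A0: "fc i j = (\<Sum>F0\<in>?S0. a F0)"
    proof -
      have "fc i j = (\<Sum>F\<in>?S0. (if RF F i = j then 1 else 0::real)) + (\<Sum>F\<in>?S1. (if RF F i = j then 1 else 0::real))"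
        unfolding fc_def by (rule split)
      also have "(\<Sum>F\<in>?S0. (if RF F i = j then 1 else 0::real)) = 0"
      proof (intro sum.neutral ballI)
        fix F assume F: "F \<in> ?S0"
        then have "RF F i = i" using R_sink fo by blast
        then show "(if RF F i = j then 1 else 0::real) = 0" using False by simp
      qed
      also have "(\<Sum>F\<in>?S1. (if RF F i = j then 1 else 0::real))
          = (\<Sum>F0\<in>?S0. \<Sum>m\<in>?B F0. (if RF (insert (i,m) F0) i = j then 1 else 0::real))"
        by (rule nons)
      also have "\<dots> = (\<Sum>F0\<in>?S0. a F0)"
      proof (rule sum.cong)
        fix F0 assume F0: "F0 \<in> ?S0"
        have "(\<Sum>m\<in>?B F0. (if RF (insert (i,m) F0) i = j then 1 else 0::real))
            = (\<Sum>m\<in>?B F0. (if RF F0 m = j then 1 else 0::real))"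
          using F0 fo add_edge(2)[of F0 i _ i] R_sink[of F0 i] by (intro sum.cong) auto
        then show "(\<Sum>m\<in>?B F0. (if RF (insert (i,m) F0) i = j then 1 else 0::real)) = a F0"
          using perF0_P1[OF fo False, of F0 E] F0 a_def by simp
      qed simp
      finally show ?thesis by simp
    qed
    have A1: "(\<Sum>k\<in>?out. fc k j) = (\<Sum>F0\<in>?S0. a F0) + ?d * (\<Sum>F0\<in>?S0. a F0)"
    proof -
      have "(\<Sum>k\<in>?out. fc k j) = (\<Sum>F\<in>?S0. \<Sum>k\<in>?out. (if RF F k = j then 1 else 0::real))
          + (\<Sum>F\<in>?S1. \<Sum>k\<in>?out. (if RF F k = j then 1 else 0::real))"
        unfolding swap by (rule split)
      also have "(\<Sum>F\<in>?S1. \<Sum>k\<in>?out. (if RF F k = j then 1 else 0::real))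
          = (\<Sum>F0\<in>?S0. \<Sum>m\<in>?B F0. \<Sum>k\<in>?out. (if RF (insert (i,m) F0) k = j then 1 else 0::real))"
        by (rule nons)
      also have "\<dots> = (\<Sum>F0\<in>?S0. ?d * a F0)"
        using perF0_P2[OF fo _ False] by (intro sum.cong) (auto simp: a_def)
      finally show ?thesis by (simp add: a_def sum_distrib_left)
    qed
    show ?thesis using A0 A1 False by (simp add: algebra_simps)
  next
    case True
    define c where "c F0 = (\<Sum>k\<in>?out. (if RF F0 k = i then 1 else 0::real))" for F0
    have A0: "fc i j = real (card ?S0)"
    proof -
      have "fc i j = (\<Sum>F\<in>?S0. (if RF F i = j then 1 else 0::real)) + (\<Sum>F\<in>?S1. (if RF F i = j then 1 else 0::real))"
        unfolding fc_def by (rule split)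
      also have "(\<Sum>F\<in>?S1. (if RF F i = j then 1 else 0::real)) = 0"
        using R_sink_iff fo True by (intro sum.neutral) auto
      also have "(\<Sum>F\<in>?S0. (if RF F i = j then 1 else 0::real)) = (\<Sum>F\<in>?S0. 1)"
        using R_sink fo True by (intro sum.cong) auto
      finally show ?thesis by simp
    qed
    have A1: "(\<Sum>k\<in>?out. fc k j) = (\<Sum>F0\<in>?S0. c F0)"
    proof -
      have "(\<Sum>k\<in>?out. fc k j) = (\<Sum>F\<in>?S0. \<Sum>k\<in>?out. (if RF F k = j then 1 else 0::real))
          + (\<Sum>F\<in>?S1. \<Sum>k\<in>?out. (if RF F k = j then 1 else 0::real))"
        unfolding swap by (rule split)
      also have "(\<Sum>F\<in>?S1. \<Sum>k\<in>?out. (if RF F k = j then 1 else 0::real)) = 0"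
      proof (rule sum.neutral, rule ballI)
        fix F assume F: "F \<in> ?S1"
        have "RF F k \<noteq> i" for k using R_prop[OF fo, of F k] F by auto
        then show "(\<Sum>k\<in>?out. (if RF F k = j then 1 else 0::real)) = 0" using True by simp
      qed
      finally show ?thesis using True by (simp add: c_def)
    qed
    have A2: "real (card S) = real (card ?S0) + (\<Sum>F0\<in>?S0. real (card (?B F0)))"
    proof -
      have "real (card S) = (\<Sum>F\<in>S. 1)" by simp
      also have "\<dots> = (\<Sum>F\<in>?S0. 1) + (\<Sum>F\<in>?S1. 1)" by (rule split)
      also have "(\<Sum>F\<in>?S1. (1::real)) = (\<Sum>F0\<in>?S0. \<Sum>m\<in>?B F0. 1)" by (rule nons)
      finally show ?thesis by simp
    qed
    have A3: "(\<Sum>F0\<in>?S0. real (card (?B F0))) = (\<Sum>F0\<in>?S0. ?d - c F0)"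
      using perF0_Q by (intro sum.cong) (auto simp: c_def algebra_simps)
    show ?thesis using A0 A1 A2 A3 True
      by (simp add: sum_subtractf algebra_simps)
  qed
qed


lemma outdeg_card:
  fixes E :: "('n::finite \<times> 'n) set"
  shows "outdeg E a = real (card {m. (a,m)\<in>E})"
proof -
  have "outdeg E a = (\<Sum>k\<in>UNIV. if (a,k)\<in>E then 1 else 0)" by (simp add: outdeg_def adj_def)
  also have "\<dots> = (\<Sum>k\<in>{k\<in>UNIV. (a,k)\<in>E}. 1)" by (rule sum.inter_filter[symmetric]) simp
  finally show ?thesis by simp
qed

lemma adj_sum_out:
  fixes E :: "('n::finite \<times> 'n) set" and g :: "'n \<Rightarrow> real"
  shows "(\<Sum>k\<in>UNIV. adj E a k * g k) = (\<Sum>k\<in>{m. (a,m)\<in>E}. g k)"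
proof -
  have "(\<Sum>k\<in>UNIV. adj E a k * g k) = (\<Sum>k\<in>UNIV. if (a,k)\<in>E then g k else 0)"
    by (rule sum.cong) (auto simp: adj_def)
  also have "\<dots> = (\<Sum>k\<in>{k\<in>UNIV. (a,k)\<in>E}. g k)" by (rule sum.inter_filter[symmetric]) simp
  finally show ?thesis by simp
qed

lemma adj_sum_in:
  fixes E :: "('n::finite \<times> 'n) set" and g :: "'n \<Rightarrow> real"
  shows "(\<Sum>k\<in>UNIV. g k * adj E k j) = (\<Sum>k\<in>in_nbrs E j. g k)"
proof -
  have "(\<Sum>k\<in>UNIV. g k * adj E k j) = (\<Sum>k\<in>UNIV. if (k,j)\<in>E then g k else 0)"
    by (rule sum.cong) (auto simp: adj_def)
  also have "\<dots> = (\<Sum>k\<in>{k\<in>UNIV. (k,j)\<in>E}. g k)" by (rule sum.inter_filter[symmetric]) simp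
  finally show ?thesis by (simp add: in_nbrs_def)
qed

lemma S_ne:
  fixes E :: "('n::finite \<times> 'n) set"
  shows "{} \<in> {F. F \<subseteq> E \<and> forestF F}"
  by (simp add: forestF_def funcF_def acyclic_def)

lemma forest_matrix_eq:
  fixes E :: "('n::finite \<times> 'n) set"
  defines "S \<equiv> {F. F \<subseteq> E \<and> forestF F}"
  defines "fc \<equiv> \<lambda>a b. (\<Sum>F\<in>S. (if RF F a = b then 1 else 0::real))"
  defines "M \<equiv> (\<chi> a b. fc a b / real (card S)) :: real^'n^'n"
  shows "forest_matrix E = M" and "M ** (mat 1 + laplacian E) = mat 1"
proof -
  let ?N = "real (card S)"
  have Npos: "?N > 0" using S_ne[of E] unfolding S_def by (simp add: card_gt_0_iff) blast
  let ?A = "mat 1 + laplacian E"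
  have AM: "?A ** M = mat 1"
  proof (simp add: vec_eq_iff, intro allI)
    fix a b :: 'n
    have "(?A ** M) $ a $ b = (\<Sum>k\<in>UNIV. ((if a = k then 1 + outdeg E a else 0) - adj E a k) * (fc k b / ?N))"
      by (simp add: matrix_matrix_mult_def mat_def laplacian_def M_def algebra_simps) (rule sum.cong, auto simp: algebra_simps add_divide_distrib)
    also have "\<dots> = (\<Sum>k\<in>UNIV. (if a = k then (1 + outdeg E a) * (fc k b / ?N) else 0)) - (\<Sum>k\<in>UNIV. adj E a k * (fc k b / ?N))"
      unfolding sum_subtractf[symmetric] by (rule sum.cong) (auto simp: algebra_simps)
    also have "\<dots> = (1 + outdeg E a) * (fc a b / ?N) - (\<Sum>k\<in>{m. (a,m)\<in>E}. fc k b / ?N)"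
      using adj_sum_out[of E a "\<lambda>k. fc k b / ?N"] by simp
    also have "\<dots> = ((1 + real (card {m. (a,m)\<in>E})) * fc a b - (\<Sum>k\<in>{m. (a,m)\<in>E}. fc k b)) / ?N"
      by (simp add: outdeg_card sum_divide_distrib diff_divide_distrib)
    also have "\<dots> = (if a = b then ?N else 0) / ?N"
      using key[where E=E and i=a and j=b] unfolding S_def fc_def by simp
    also have "\<dots> = mat 1 $ a $ b" using Npos by (auto simp: mat_def)
    finally show "(?A ** M) $ a $ b = mat 1 $ a $ b" .
  qed
  then show MA: "M ** ?A = mat 1" using matrix_left_right_inverse by blast
  define B where "B = matrix_inv ?A"
  have "?A ** B = mat 1 \<and> B ** ?A = mat 1"
    unfolding B_def matrix_inv_def by (rule someI[of _ M]) (use AM MA in simp)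
  then have "B = M"
    by (metis AM matrix_mul_assoc matrix_mul_lid matrix_mul_rid)
  then show "forest_matrix E = M" by (simp add: forest_matrix_def B_def)
qed


lemma exp_pmf:
  assumes "finite S" "S \<noteq> {}"
  shows "measure_pmf.expectation (pmf_of_set S) (f :: 'a \<Rightarrow> real) = (\<Sum>x\<in>S. f x) / real (card S)"
  using integral_pmf_of_set[OF assms(2,1)] by simp

lemma var_pmf:
  assumes "finite S" "S \<noteq> {}"
  shows "measure_pmf.variance (pmf_of_set S) (f :: 'a \<Rightarrow> real)
       = (\<Sum>x\<in>S. (f x)\<^sup>2) / real (card S) - ((\<Sum>x\<in>S. f x) / real (card S))\<^sup>2"
proof -
  have fin: "finite (set_pmf (pmf_of_set S))" using assms by simp
  have "measure_pmf.variance (pmf_of_set S) f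
      = measure_pmf.expectation (pmf_of_set S) (\<lambda>x. (f x)\<^sup>2) - (measure_pmf.expectation (pmf_of_set S) f)\<^sup>2"
    by (rule measure_pmf.variance_eq) (use integrable_measure_pmf_finite[OF fin] in auto)
  then show ?thesis using exp_pmf[OF assms] by simp
qed

theorem lemma4p1:
  fixes E :: "('n::finite \<times> 'n) set" and i j :: 'n
  assumes no_loops: "\<forall>v. (v, v) \<notin> E"
    and ij: "i \<noteq> j"
  shows "measure_pmf.expectation (pmf_of_set (spanning_converging_forests E)) (est_tilde E i j)
           = forest_matrix E $ i $ j
       \<and> measure_pmf.variance (pmf_of_set (spanning_converging_forests E)) (est_tilde E i j)
           = forest_matrix E $ i $ j / (1 + outdeg E j) - (forest_matrix E $ i $ j)\<^sup>2
       \<and> measure_pmf.variance (pmf_of_set (spanning_converging_forests E)) (est_tilde E i j)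
           \<le> measure_pmf.variance (pmf_of_set (spanning_converging_forests E)) (est_hat i j)"
proof -
  define S where "S = {F. F \<subseteq> E \<and> forestF F}"
  have SE: "spanning_converging_forests E = S" by (simp add: S_def scf_char)
  define fc where "fc = (\<lambda>a b. (\<Sum>F\<in>S. (if RF F a = b then 1 else 0::real)))"
  define M where "M = ((\<chi> a b. fc a b / real (card S)) :: real^'n^'n)"
  have fin: "finite S" by simp
  have ne: "S \<noteq> {}" using S_ne[of E] by (auto simp: S_def)
  let ?N = "real (card S)"
  have Npos: "?N > 0" using fin ne by (simp add: card_gt_0_iff)
  define d where "d = outdeg E j"
  have d0: "d \<ge> 0" by (simp add: d_def outdeg_card)
  define \<omega> where "\<omega> = fc i j / ?N"
  have om: "forest_matrix E $ i $ j = \<omega>"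
    using forest_matrix_eq(1)[where E=E] unfolding \<omega>_def fc_def S_def by simp
  have om0: "\<omega> \<ge> 0" unfolding \<omega>_def fc_def by (intro divide_nonneg_nonneg sum_nonneg) auto
  have MA: "M ** (mat 1 + laplacian E) = mat 1"
    using forest_matrix_eq(2)[where E=E] unfolding M_def fc_def S_def by simp
  have rel: "(\<Sum>k\<in>in_nbrs E j. fc i k) = (1 + d) * fc i j"
  proof -
    have "0 = (M ** (mat 1 + laplacian E)) $ i $ j" using MA ij by (simp add: mat_def)
    also have "\<dots> = (\<Sum>k\<in>UNIV. (fc i k / ?N) * ((if k = j then 1 + d else 0) - adj E k j))"
      unfolding d_def by (simp add: matrix_matrix_mult_def mat_def laplacian_def M_def)
         (rule sum.cong, auto simp: algebra_simps)
    also have "\<dots> = (\<Sum>k\<in>UNIV. (if k = j then (fc i k / ?N) * (1 + d) else 0)) - (\<Sum>k\<in>UNIV. (fc i k / ?N) * adj E k j)"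
      unfolding sum_subtractf[symmetric] by (rule sum.cong) (auto simp: algebra_simps)
    also have "\<dots> = (fc i j / ?N) * (1 + d) - (\<Sum>k\<in>in_nbrs E j. fc i k / ?N)"
      using adj_sum_in[of "\<lambda>k. fc i k / ?N" E j] by simp
    also have "\<dots> = ((1 + d) * fc i j - (\<Sum>k\<in>in_nbrs E j. fc i k)) / ?N"
      by (simp add: sum_divide_distrib diff_divide_distrib algebra_simps)
    finally show ?thesis using Npos by auto
  qed
  have fo: "forestF F" if "F \<in> S" for F using that by (simp add: S_def)
  have eh: "est_hat a b F = (if RF F a = b then 1 else 0)" if "F \<in> S" for a b F
    using froot_eq[OF fo[OF that]] by (simp add: est_hat_def)
  have et: "est_tilde E i j F = (1 / (1 + d)) * (\<Sum>k\<in>in_nbrs E j. (if RF F i = k then 1 else 0))"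
    if "F \<in> S" for F
    using eh[OF that] by (simp add: est_tilde_def d_def)
  have et2: "(est_tilde E i j F)\<^sup>2 = est_tilde E i j F / (1 + d)" if "F \<in> S" for F
    using et[OF that] d0 by (simp add: power2_eq_square)
  have E1: "(\<Sum>F\<in>S. est_tilde E i j F) = fc i j"
  proof -
    have "(\<Sum>F\<in>S. est_tilde E i j F) = (\<Sum>F\<in>S. (1 / (1 + d)) * (\<Sum>k\<in>in_nbrs E j. (if RF F i = k then 1 else 0)))"
      using et by (rule sum.cong[OF refl])
    also have "\<dots> = (1 / (1 + d)) * (\<Sum>F\<in>S. \<Sum>k\<in>in_nbrs E j. (if RF F i = k then 1 else 0))"
      by (rule sum_distrib_left[symmetric])
    also have "\<dots> = (1 / (1 + d)) * (\<Sum>k\<in>in_nbrs E j. fc i k)"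
      unfolding fc_def by (subst sum.swap) (rule refl)
    also have "\<dots> = fc i j" using rel d0 by simp
    finally show ?thesis .
  qed
  have E2: "(\<Sum>F\<in>S. (est_tilde E i j F)\<^sup>2) = fc i j / (1 + d)"
  proof -
    have "(\<Sum>F\<in>S. (est_tilde E i j F)\<^sup>2) = (\<Sum>F\<in>S. est_tilde E i j F / (1 + d))"
      using et2 by (rule sum.cong[OF refl])
    also have "\<dots> = fc i j / (1 + d)" using E1 by (simp add: sum_divide_distrib[symmetric])
    finally show ?thesis .
  qed
  have H1: "(\<Sum>F\<in>S. est_hat i j F) = fc i j"
    unfolding fc_def using eh by (intro sum.cong) auto
  have H2: "(\<Sum>F\<in>S. (est_hat i j F)\<^sup>2) = fc i j"
    unfolding fc_def using eh by (intro sum.cong) auto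
  have expT: "measure_pmf.expectation (pmf_of_set S) (est_tilde E i j) = \<omega>"
    using exp_pmf[OF fin ne] E1 by (simp add: \<omega>_def)
  have varT: "measure_pmf.variance (pmf_of_set S) (est_tilde E i j) = \<omega> / (1 + d) - \<omega>\<^sup>2"
    using var_pmf[OF fin ne] E1 E2 by (simp add: \<omega>_def)
  have varH: "measure_pmf.variance (pmf_of_set S) (est_hat i j) = \<omega> - \<omega>\<^sup>2"
    using var_pmf[OF fin ne] H1 H2 by (simp add: \<omega>_def)
  have le: "\<omega> / (1 + d) \<le> \<omega>"
    using om0 d0 by (simp add: divide_le_eq mult_le_cancel_left1 algebra_simps)
  show ?thesis unfolding SE om using expT varT varH le by (simp add: d_def)
qed

end
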